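(* Let $A=(a_{ij})$ be an $n\times n$ symmetric matrix with nonnegative entries and zero diagonal (the weighted adjacency matrix of an undirected edge-weighted graph without self-loops on vertex set $V=\{1,\dots,n\}$). Let $S\subseteq V$ with $S\neq\emptyset$, and define $$\gamma_S=\max_{\mathbf{x}\in\Delta_{V\setminus S}}\ \min_{i\in S}\ \frac{\mathbf{x}'A\mathbf{x}-(A\mathbf{x})_i}{\mathbf{x}'\mathbf{x}}.$$ Let $\alpha>\gamma_S$. If $\mathbf{x}$ is a local maximizer of $f_S^\alpha(\mathbf{x})=\mathbf{x}'(A-\alpha\hat I_S)\mathbf{x}$ over $\Delta$, then $\sigma(\mathbf{x})\cap S\neq\emptyset$.
   Context: $\Delta=\{\mathbf{x}\in\mathbb{R}^n:\sum_i x_i=1,\ x_i\ge 0\}$ is the standard simplex; for $T\subseteq V$, $\Delta_T=\{\mathbf{x}\in\Delta:\sigma(\mathbf{x})\subseteq T\}$, where $\sigma(\mathbf{x})=\{i\in V: x_i>0\}$ is the support. $\hat I_S$ is the $n\times n$ diagonal matrix whose diagonal entries are $1$ at indices in $V\setminus S$ and $0$ at indices in $S$. A prime denotes transposition. *)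

theory Defs
  imports "HOL-Analysis.Analysis"
begin

text \<open>Vertex set V is the finite index type 'n; vectors are real^'n, matrices real^'n^'n.\<close>

definition std_simplex :: "(real^'n) set" where
  "std_simplex = {x. sum (\<lambda>i. x $ i) UNIV = 1 \<and> (\<forall>i. x $ i \<ge> 0)}"

definition supp :: "real^'n \<Rightarrow> 'n set" where
  "supp x = {i. x $ i > 0}"

definition simplex_on :: "'n set \<Rightarrow> (real^'n) set" where
  "simplex_on T = {x \<in> std_simplex. supp x \<subseteq> T}"

definition Ihat :: "'n set \<Rightarrow> real^'n^'n" where
  "Ihat S = (\<chi> i j. if i = j \<and> i \<notin> S then 1 else 0)"

text \<open>gamma_S = max over x in Delta_{V-S} of min_{i in S} (x'Ax - (Ax)_i)/(x'x).
  The maximum is attained (continuous function on a compact set), so it equals the supremum.\<close>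
definition gamma :: "real^'n^'n \<Rightarrow> 'n set \<Rightarrow> real" where
  "gamma A S = Sup ((\<lambda>x. Min ((\<lambda>i. (x \<bullet> (A *v x) - (A *v x) $ i) / (x \<bullet> x)) ` S))
                     ` simplex_on (UNIV - S))"

definition f_S :: "real^'n^'n \<Rightarrow> 'n set \<Rightarrow> real \<Rightarrow> real^'n \<Rightarrow> real" where
  "f_S A S \<alpha> x = x \<bullet> ((A - \<alpha> *\<^sub>R Ihat S) *v x)"

definition local_maximizer_on :: "(real^'n \<Rightarrow> real) \<Rightarrow> (real^'n) set \<Rightarrow> real^'n \<Rightarrow> bool" where
  "local_maximizer_on f D x \<longleftrightarrow> x \<in> D \<and>
     (\<exists>e>0. \<forall>y\<in>D. dist y x < e \<longrightarrow> f y \<le> f x)"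

end

theory Submission
  imports Defs
begin

lemma f_eq: "f_S A S \<alpha> z = z \<bullet> (A *v z) - \<alpha> * (z \<bullet> (Ihat S *v z))"
  unfolding f_S_def by (simp add: matrix_vector_mult_diff_rdistrib scaleR_matrix_vector_assoc[symmetric] inner_diff_right)

lemma Ihat_mult: "(Ihat S *v z) $ i = (if i \<in> S then 0 else z $ i)"
proof -
  have "(\<Sum>j\<in>UNIV. (if i = j \<and> i \<notin> S then 1 else 0) * z $ j) = (\<Sum>j\<in>UNIV. if j = i then (if i\<in>S then 0 else z$i) else 0)"
    by (rule sum.cong) auto
  then show ?thesis unfolding Ihat_def matrix_vector_mult_def by (simp only: vec_lambda_beta) simp
qed

lemma mv_axis: "((A::real^'n^'n) *v axis j 1) $ i = A $ i $ j"
  unfolding matrix_vector_mult_def axis_def by (simp add: if_distrib cong: if_cong)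

lemma inner_vec: "(u::real^'n) \<bullet> v = (\<Sum>i\<in>UNIV. u $ i * v $ i)"
  by (simp add: inner_vec_def)

lemma quad: fixes M :: "real^'n^'n"
  shows "(a *\<^sub>R u + b *\<^sub>R v) \<bullet> (M *v (a *\<^sub>R u + b *\<^sub>R v)) =
     a^2 * (u \<bullet> (M *v u)) + a * b * (u \<bullet> (M *v v) + v \<bullet> (M *v u)) + b^2 * (v \<bullet> (M *v v))"
  by (simp add: matrix_vector_right_distrib matrix_vector_mult_scaleR inner_add_left inner_add_right power2_eq_square algebra_simps)

theorem proposition1:
  fixes A :: "real^'n^'n" and S :: "'n set" and \<alpha> :: real and x :: "real^'n"
  assumes "transpose A = A"
    and "\<forall>i j. A $ i $ j \<ge> 0"
    and "\<forall>i. A $ i $ i = 0"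
    and "S \<noteq> {}"
    and "\<alpha> > gamma A S"
    and "local_maximizer_on (f_S A S \<alpha>) std_simplex x"
  shows "supp x \<inter> S \<noteq> {}"
proof
  assume dis: "supp x \<inter> S = {}"
  have symA: "A $ i $ j = A $ j $ i" for i j
  proof -
    have "transpose A $ j $ i = A $ j $ i" using assms(1) by simp
    then show ?thesis by (simp add: transpose_def)
  qed
  from assms(6) obtain eps where xD: "x \<in> std_simplex" and eps: "eps > 0"
    and lm: "\<forall>y\<in>std_simplex. dist y x < eps \<longrightarrow> f_S A S \<alpha> y \<le> f_S A S \<alpha> x"
    unfolding local_maximizer_on_def by blast
  have xs1: "(\<Sum>i\<in>UNIV. x $ i) = 1" and xge: "\<And>i. x $ i \<ge> 0"
    using xD unfolding std_simplex_def by auto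
  have x0: "x $ i = 0" if "i \<in> S" for i
    using dis that xge[of i] unfolding supp_def by force
  have xsub: "x \<in> simplex_on (UNIV - S)"
    using xD dis unfolding simplex_on_def by auto
  have Ix: "Ihat S *v x = x"
    by (simp add: vec_eq_iff Ihat_mult x0)
  have xnz: "x \<noteq> 0" using xs1 by auto
  have xx: "x \<bullet> x > 0" using xnz by simp
  obtain B where B: "\<And>z. norm (A *v z) \<le> B * norm z"
    using linear_bounded_pos[OF matrix_vector_mul_linear[of A]] by blast
  define g where "g = (\<lambda>z::real^'n. Min ((\<lambda>i. (z \<bullet> (A *v z) - (A *v z) $ i) / (z \<bullet> z)) ` S))"
  obtain i0 where i0: "i0 \<in> S" using assms(4) by blast
  have bdd: "bdd_above (g ` simplex_on (UNIV - S))"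
  proof (rule bdd_aboveI2)
    fix z assume z: "z \<in> simplex_on (UNIV - S)"
    then have zs: "(\<Sum>i\<in>UNIV. z $ i) = 1" and zge: "\<And>i. z $ i \<ge> 0"
      unfolding simplex_on_def std_simplex_def by auto
    have znz: "z \<noteq> 0" using zs by auto
    have zz: "z \<bullet> z > 0" using znz by simp
    have Az: "(A *v z) $ i0 \<ge> 0"
      unfolding matrix_vector_mult_def using assms(2) zge by (simp add: sum_nonneg)
    have "z \<bullet> (A *v z) \<le> norm z * norm (A *v z)" by (rule order_trans[OF abs_ge_self Cauchy_Schwarz_ineq2])
    also have "\<dots> \<le> norm z * (B * norm z)" by (rule mult_left_mono[OF B]) simp
    also have "\<dots> = B * (z \<bullet> z)" by (simp add: power2_norm_eq_inner[symmetric] power2_eq_square)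
    finally have "z \<bullet> (A *v z) \<le> B * (z \<bullet> z)" .
    then have "(z \<bullet> (A *v z) - (A *v z) $ i0) / (z \<bullet> z) \<le> B"
      using zz Az by (simp add: divide_le_eq)
    moreover have "g z \<le> (z \<bullet> (A *v z) - (A *v z) $ i0) / (z \<bullet> z)"
      unfolding g_def using i0 by (intro Min_le) auto
    ultimately show "g z \<le> B" by linarith
  qed
  have "g x \<le> gamma A S"
    unfolding gamma_def g_def[symmetric] by (rule cSup_upper[OF imageI[OF xsub] bdd])
  with assms(5) have "g x < \<alpha>" by linarith
  then obtain j where jS: "j \<in> S" and jl: "(x \<bullet> (A *v x) - (A *v x) $ j) / (x \<bullet> x) < \<alpha>"
    unfolding g_def using assms(4) by (subst (asm) Min_less_iff) auto
  define b where "b = (A *v x) $ j"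
  define c where "c = x \<bullet> (A *v x) - \<alpha> * (x \<bullet> x)"
  have bc: "b - c > 0" using jl xx unfolding b_def c_def by (simp add: divide_less_eq algebra_simps)
  define e where "e = (axis j 1 :: real^'n)"
  have xAe: "x \<bullet> (A *v e) = b"
  proof -
    have "x \<bullet> (A *v e) = (\<Sum>i\<in>UNIV. x$i * A$i$j)" unfolding inner_vec e_def by (simp add: mv_axis)
    also have "\<dots> = b" unfolding b_def matrix_vector_mult_def by (simp add: symA mult.commute)
    finally show ?thesis .
  qed
  have eAx: "e \<bullet> (A *v x) = b" unfolding e_def b_def by (simp add: inner_axis')
  have eAe: "e \<bullet> (A *v e) = 0" unfolding e_def using assms(3) by (simp add: inner_axis' mv_axis)
  have Ie: "Ihat S *v e = 0" by (simp add: vec_eq_iff Ihat_mult e_def axis_def jS)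
  have ex: "e \<bullet> x = 0" unfolding e_def by (simp add: inner_axis' x0 jS)
  define y where "y = (\<lambda>t::real. (1 - t) *\<^sub>R x + t *\<^sub>R e)"
  have fy: "f_S A S \<alpha> (y t) - f_S A S \<alpha> x = t * (2 * (b - c) + t * (c - 2 * b))" for t
  proof -
    have h1: "y t \<bullet> (A *v y t) = (1-t)^2 * (x \<bullet> (A *v x)) + (1-t) * t * (2*b)"
      unfolding y_def quad xAe eAx eAe by simp
    have h2: "y t \<bullet> (Ihat S *v y t) = (1-t)^2 * (x \<bullet> x)"
      unfolding y_def quad Ix Ie using ex by (simp add: inner_commute)
    have h3: "f_S A S \<alpha> x = c" unfolding c_def f_eq Ix ..
    show ?thesis unfolding h3 f_eq[of A S \<alpha> "y t"] h1 h2 c_def by (simp add: power2_eq_square algebra_simps)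
  qed
  have ysimp: "y t \<in> std_simplex" if "0 \<le> t" "t \<le> 1" for t
  proof -
    have "(\<Sum>i\<in>UNIV. y t $ i) = (1 - t) * (\<Sum>i\<in>UNIV. x $ i) + t * (\<Sum>i\<in>UNIV. e $ i)"
      unfolding y_def by (simp add: sum.distrib sum_distrib_left)
    moreover have "(\<Sum>i\<in>UNIV. e $ i) = 1" unfolding e_def axis_def by simp
    moreover have "y t $ i \<ge> 0" for i
      unfolding y_def e_def using that xge[of i] by (simp add: axis_def)
    ultimately show ?thesis unfolding std_simplex_def using xs1 by auto
  qed
  have dy: "dist (y t) x = \<bar>t\<bar> * norm (e - x)" for t
  proof -
    have "y t - x = t *\<^sub>R (e - x)" unfolding y_def by (simp add: algebra_simps)
    then show ?thesis by (simp add: dist_norm)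
  qed
  define t where "t = min 1 (min (eps / (2 * (norm (e - x) + 1))) ((b - c) / (\<bar>c - 2 * b\<bar> + 1)))"
  have t0: "t > 0"
  proof -
    have "2 * (norm (e - x) + 1) > 0" by (simp add: add_nonneg_pos)
    then have "eps / (2 * (norm (e - x) + 1)) > 0" using eps by simp
    moreover have "(b - c) / (\<bar>c - 2 * b\<bar> + 1) > 0" using bc by (simp add: add_nonneg_pos)
    ultimately show ?thesis unfolding t_def by simp
  qed
  have t1: "t \<le> 1" unfolding t_def by simp
  have P: "2 * (norm (e - x) + 1) > 0" by (simp add: add_nonneg_pos)
  have "t \<le> eps / (2 * (norm (e - x) + 1))" unfolding t_def by simp
  then have T1: "t * (2 * (norm (e - x) + 1)) \<le> eps" using P by (simp only: pos_le_divide_eq)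
  have T2: "t * (2 * (norm (e - x) + 1)) = 2 * (t * norm (e - x)) + 2 * t" by (simp only: algebra_simps)
  have T3: "t * norm (e - x) \<ge> 0" using t0 by simp
  have "t * norm (e - x) < eps" using T1 T2 T3 t0 by linarith
  then have tdist: "dist (y t) x < eps" using t0 by (simp add: dy)
  have P2: "\<bar>c - 2 * b\<bar> + 1 > 0" by (simp add: add_nonneg_pos)
  have "t \<le> (b - c) / (\<bar>c - 2 * b\<bar> + 1)" unfolding t_def by simp
  then have U1: "t * (\<bar>c - 2 * b\<bar> + 1) \<le> b - c" using P2 by (simp only: pos_le_divide_eq)
  have U2: "t * (\<bar>c - 2 * b\<bar> + 1) = t * \<bar>c - 2 * b\<bar> + t" by (simp only: algebra_simps)
  have U3: "t * (- \<bar>c - 2 * b\<bar>) \<le> t * (c - 2 * b)"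
    by (rule mult_left_mono) (use t0 in auto)
  have "t * (c - 2 * b) \<ge> - (b - c)" using U1 U2 U3 t0 by simp
  moreover have gen: "\<And>p q::real. -q \<le> p \<Longrightarrow> 0 < q \<Longrightarrow> 0 < 2 * q + p" by linarith
  ultimately have "2 * (b - c) + t * (c - 2 * b) > 0" using bc by blast
  then have "f_S A S \<alpha> (y t) - f_S A S \<alpha> x > 0" unfolding fy using t0 by simp
  moreover have "f_S A S \<alpha> (y t) \<le> f_S A S \<alpha> x"
    using lm ysimp[OF less_imp_le[OF t0] t1] tdist by blast
  ultimately show False by linarith
qed

end
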